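(* Let $V$ be $\eta_*$-regular and $\mu_V=\frac1N\sum_i\delta_{V_i}$. For every $p\ge2$ and every $a+bi\in\mathcal D_*$: if $a\ge0$ then $\displaystyle\int\frac{d\mu_V(x)}{|x-a-bi|^p}\asymp\frac{\sqrt{a+b}}{b^{p-1}}$; if $a\le0$ then $\displaystyle\int\frac{d\mu_V(x)}{|x-a-bi|^p}\asymp\frac{1}{(|a|+b)^{p-3/2}}$.
   Context: $V=\mathrm{diag}(V_1\le\dots\le V_N)$ deterministic real, $m_V(z)=\frac1N\sum_i(V_i-z)^{-1}$. $V$ is $\eta_*$-regular ($\eta_*=N^{-\phi_*}$, $0<\phi_*\le2/3$) if for some $C_V$: $C_V^{-1}\frac{\eta}{\sqrt{|E|+\eta}}\le\mathrm{Im}\,m_V(E+i\eta)\le C_V\frac{\eta}{\sqrt{|E|+\eta}}$ for $-1\le E\le0$, $\eta_*\le\eta\le10$; $C_V^{-1}\sqrt{|E|+\eta}\le\mathrm{Im}\,m_V\le C_V\sqrt{|E|+\eta}$ for $0\le E\le1$, $\eta_*^{1/2}\sqrt{|E|}+\eta_*\le\eta\le10$; no $V_i\in[-1,-\eta_*]$; $\|V\|\le N^{C_V}$. $\mathcal D_*=\{E+i\eta:-3/4\le E\le0,\,2\eta_*\le\eta\le10\}\cup\{E+i\eta:0\le E\le3/4,\,\eta_*^{1/2}\sqrt{|E|}+\eta_*\le\eta\le10\}\cup\{E+i\eta:-3/4\le E\le-2\eta_*,\,0\le\eta\le10\}$. $\asymp$ holds with constants depending only on $C_V$ and $p$. *)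

theory Defs
  imports Complex_Main
begin

(* V = diag(V_0 <= ... <= V_{N-1}), indices 0-based: i < N *)

definition eta_star :: "nat \<Rightarrow> real \<Rightarrow> real" where
  "eta_star N phi = real N powr (- phi)"

definition m_V :: "nat \<Rightarrow> (nat \<Rightarrow> real) \<Rightarrow> complex \<Rightarrow> complex" where
  "m_V N V z = (1 / of_nat N) * (\<Sum>i<N. 1 / (complex_of_real (V i) - z))"

definition regular :: "nat \<Rightarrow> real \<Rightarrow> real \<Rightarrow> (nat \<Rightarrow> real) \<Rightarrow> bool" where
  "regular N phi CV V \<longleftrightarrow>
     N \<ge> 1 \<and> 0 < phi \<and> phi \<le> 2/3 \<and>
     (\<forall>i j. i \<le> j \<longrightarrow> j < N \<longrightarrow> V i \<le> V j) \<and>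
     (\<forall>E \<eta>. -1 \<le> E \<and> E \<le> 0 \<and> eta_star N phi \<le> \<eta> \<and> \<eta> \<le> 10 \<longrightarrow>
        (1/CV) * (\<eta> / sqrt (\<bar>E\<bar> + \<eta>)) \<le> Im (m_V N V (Complex E \<eta>)) \<and>
        Im (m_V N V (Complex E \<eta>)) \<le> CV * (\<eta> / sqrt (\<bar>E\<bar> + \<eta>))) \<and>
     (\<forall>E \<eta>. 0 \<le> E \<and> E \<le> 1 \<and> sqrt (eta_star N phi) * sqrt \<bar>E\<bar> + eta_star N phi \<le> \<eta> \<and> \<eta> \<le> 10 \<longrightarrow>
        (1/CV) * sqrt (\<bar>E\<bar> + \<eta>) \<le> Im (m_V N V (Complex E \<eta>)) \<and>
        Im (m_V N V (Complex E \<eta>)) \<le> CV * sqrt (\<bar>E\<bar> + \<eta>)) \<and>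
     (\<forall>i<N. V i \<notin> {-1 .. - eta_star N phi}) \<and>
     (\<forall>i<N. \<bar>V i\<bar> \<le> real N powr CV)"

definition D_star :: "nat \<Rightarrow> real \<Rightarrow> complex set" where
  "D_star N phi =
     {Complex E \<eta> | E \<eta>. -3/4 \<le> E \<and> E \<le> 0 \<and> 2 * eta_star N phi \<le> \<eta> \<and> \<eta> \<le> 10}
   \<union> {Complex E \<eta> | E \<eta>. 0 \<le> E \<and> E \<le> 3/4 \<and>
        sqrt (eta_star N phi) * sqrt \<bar>E\<bar> + eta_star N phi \<le> \<eta> \<and> \<eta> \<le> 10}
   \<union> {Complex E \<eta> | E \<eta>. -3/4 \<le> E \<and> E \<le> - 2 * eta_star N phi \<and> 0 \<le> \<eta> \<and> \<eta> \<le> 10}"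

definition moment :: "nat \<Rightarrow> (nat \<Rightarrow> real) \<Rightarrow> real \<Rightarrow> complex \<Rightarrow> real" where
  "moment N V p z = (1 / real N) * (\<Sum>i<N. 1 / (cmod (complex_of_real (V i) - z) powr p))"

end

theory Submission
  imports Defs
begin

definition Sf :: "nat \<Rightarrow> (nat \<Rightarrow> real) \<Rightarrow> real \<Rightarrow> real \<Rightarrow> real" where
  "Sf N V E h = (1 / real N) * (\<Sum>i<N. 1 / ((V i - E)^2 + h^2))"

lemma Im_mV: "Im (m_V N V (Complex E h)) = h * Sf N V E h"
proof -
  have ii: "Im (1 / (complex_of_real (V i) - Complex E h)) = h / ((V i - E)^2 + h^2)" for i
    by (simp add: Im_divide power2_eq_square complex_eq_iff)
  have e: "(1 / of_nat N :: complex) * s = s / complex_of_real (real N)" for s by simp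
  have "Im (m_V N V (Complex E h)) = (1 / real N) * (\<Sum>i<N. Im (1 / (complex_of_real (V i) - Complex E h)))"
    unfolding m_V_def e Im_divide_of_real Im_sum by simp
  also have "\<dots> = (1 / real N) * (\<Sum>i<N. h * (1 / ((V i - E)^2 + h^2)))"
    using ii by simp
  finally show ?thesis unfolding Sf_def by (simp add: sum_distrib_left)
qed

lemma moment_eq: "moment N V p (Complex a b) = (1 / real N) * (\<Sum>i<N. ((V i - a)^2 + b^2) powr (-(p/2)))"
proof -
  have "1 / (cmod (complex_of_real (V i) - Complex a b) powr p) = ((V i - a)^2 + b^2) powr (-(p/2))" for i
  proof -
    have c: "cmod (complex_of_real (V i) - Complex a b) = ((V i - a)^2 + b^2) powr (1/2)"
      by (simp add: cmod_def powr_half_sqrt)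
    show ?thesis unfolding c by (simp add: powr_powr powr_minus_divide)
  qed
  then show ?thesis unfolding moment_def by simp
qed
lemma Sf_nonneg: "0 \<le> Sf N V E h"
  unfolding Sf_def by (auto intro!: sum_nonneg divide_nonneg_nonneg)

lemma t1: fixes d t q R h :: real assumes q: "1 \<le> q" and d0: "0 < d" and dR: "d \<le> R^2 + h^2"
 shows "1 / d * (R^2 + h^2) powr (1 - q) \<le> 1 / d * d powr (1 - q)"
proof -
  have "(R^2 + h^2) powr (1 - q) \<le> d powr (1 - q)" using powr_mono2'[of "1 - q" d "R^2 + h^2"] q d0 dR by linarith
  from mult_left_mono[OF this, of "1/d"] d0 show ?thesis by simp
qed
lemma t2: fixes d q :: real assumes d0: "0 < d" shows "1 / d * d powr (1 - q) = d powr (-q)"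
proof -
  have "d powr (-q) = d powr ((1 - q) - 1)" by simp
  also have "\<dots> = d powr (1 - q) / d powr 1" by (rule powr_diff)
  also have "\<dots> = d powr (1 - q) / d" using d0 by (simp only: powr_one less_imp_le)
  also have "\<dots> = 1 / d * d powr (1 - q)" by (simp only: times_divide_eq_left mult_1_left)
  finally show ?thesis by (rule sym)
qed

lemma upper_gen:
  fixes q W M a b h :: real
  assumes q: "1 \<le> q" and W: "0 < W" and h: "0 < h"
    and tW: "\<And>i. i < N \<Longrightarrow> W \<le> (V i - a)^2 + b^2"
    and tM: "\<And>i. i < N \<Longrightarrow> (V i - a)^2 + h^2 \<le> M * ((V i - a)^2 + b^2)"
  shows "(1 / real N) * (\<Sum>i<N. ((V i - a)^2 + b^2) powr (-q)) \<le> M * Sf N V a h * W powr (1 - q)"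
proof -
  have tm: "((V i - a)^2 + b^2) powr (-q) \<le> M * (1 / ((V i - a)^2 + h^2)) * W powr (1 - q)" if i: "i < N" for i
  proof -
    define t where "t = (V i - a)^2 + b^2"
    define d where "d = (V i - a)^2 + h^2"
    have t0: "0 < t" using tW[OF i] W unfolding t_def by linarith
    have d0: "0 < d" unfolding d_def using h by (simp add: add_nonneg_pos)
    have dM: "d \<le> M * t" using tM[OF i] unfolding d_def t_def .
    have Mt: "0 < M * t" using dM d0 by linarith
    have M0: "0 < M" using Mt t0 by (simp add: zero_less_mult_iff)
    have e: "t powr (-q) = 1 / t * t powr (1 - q)" by (rule t2[OF t0, symmetric])
    have l1: "1 / t \<le> M * (1 / d)" using dM t0 d0 by (simp add: field_simps)
    have l2: "1 / t * t powr (1 - q) \<le> M * (1 / d) * t powr (1 - q)" by (rule mult_right_mono[OF l1]) simp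
    have l3: "t powr (1 - q) \<le> W powr (1 - q)" using powr_mono2'[of "1 - q" W t] q W tW[OF i] unfolding t_def by simp
    have l4: "M * (1 / d) * t powr (1 - q) \<le> M * (1 / d) * W powr (1 - q)"
      by (rule mult_left_mono[OF l3]) (use M0 d0 in simp)
    have "t powr (-q) \<le> M * (1 / d) * W powr (1 - q)" unfolding e using l2 l4 by linarith
    then show ?thesis unfolding t_def d_def .
  qed
  have "(\<Sum>i<N. ((V i - a)^2 + b^2) powr (-q)) \<le> (\<Sum>i<N. M * (1 / ((V i - a)^2 + h^2)) * W powr (1 - q))"
    by (rule sum_mono) (use tm in auto)
  also have "\<dots> = M * (\<Sum>i<N. 1 / ((V i - a)^2 + h^2)) * W powr (1 - q)"
    by (simp add: sum_distrib_left sum_distrib_right mult.assoc)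
  finally have "(\<Sum>i<N. ((V i - a)^2 + b^2) powr (-q)) \<le> M * (\<Sum>i<N. 1 / ((V i - a)^2 + h^2)) * W powr (1 - q)" .
  then show ?thesis unfolding Sf_def
    by (simp add: divide_right_mono mult.commute mult.left_commute)
qed

definition Fr :: "nat \<Rightarrow> (nat \<Rightarrow> real) \<Rightarrow> real \<Rightarrow> real \<Rightarrow> real \<Rightarrow> real" where
  "Fr N V E h R = (1 / real N) * (\<Sum>i\<in>{i. i < N \<and> R^2 < (V i - E)^2}. 1 / ((V i - E)^2 + h^2))"

lemma far_triv:
  assumes "0 < R"
  shows "Fr N V E h R \<le> 1 / R^2"
proof -
  let ?A = "{i. i < N \<and> R^2 < (V i - E)^2}"
  have fin: "finite ?A" by simp
  have "(\<Sum>i\<in>?A. 1 / ((V i - E)^2 + h^2)) \<le> (\<Sum>i\<in>?A. 1 / R^2)"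
  proof (rule sum_mono)
    fix i assume "i \<in> ?A"
    hence "R^2 < (V i - E)^2" by simp
    hence "R^2 \<le> (V i - E)^2 + h^2" using zero_le_power2[of h] by linarith
    then show "1 / ((V i - E)^2 + h^2) \<le> 1 / R^2" using assms by (intro frac_le) auto
  qed
  also have "\<dots> = real (card ?A) / R^2" by simp
  also have "\<dots> \<le> real N / R^2"
  proof -
    have "card ?A \<le> card {..<N}" by (intro card_mono) auto
    then show ?thesis using assms by (intro divide_right_mono) auto
  qed
  finally show ?thesis unfolding Fr_def
    by (cases "N = 0") (auto simp: field_simps)
qed

lemma aux2: "(y::real) < x \<Longrightarrow> 0 \<le> z \<Longrightarrow> x + y \<le> 2 * x + 2 * z" by linarith

lemma aux3: assumes "(0::real) < Y" "Y \<le> 2 * X" shows "1 / X \<le> 2 / Y"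
proof -
  have X: "0 < X" using assms by linarith
  have "1 / X = 2 / (2 * X)" by simp
  also have "\<dots> \<le> 2 / Y" by (rule frac_le) (use assms X in auto)
  finally show ?thesis .
qed

lemma far_reg:
  assumes "0 < R"
  shows "Fr N V E h R \<le> 2 * Sf N V E R"
proof -
  let ?A = "{i. i < N \<and> R^2 < (V i - E)^2}"
  have "(\<Sum>i\<in>?A. 1 / ((V i - E)^2 + h^2)) \<le> (\<Sum>i\<in>?A. 2 / ((V i - E)^2 + R^2))"
  proof (rule sum_mono)
    fix i assume "i \<in> ?A"
    hence r: "R^2 < (V i - E)^2" by simp
    have "0 < R^2" using assms by simp
    then have pos: "0 < (V i - E)^2 + R^2" by (simp add: add_nonneg_pos)
    have le: "(V i - E)^2 + R^2 \<le> 2 * (V i - E)^2 + 2 * h^2" using aux2[OF r zero_le_power2[of h]] .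
    then have le': "(V i - E)^2 + R^2 \<le> 2 * ((V i - E)^2 + h^2)" by (simp only: distrib_left)
    show "1 / ((V i - E)^2 + h^2) \<le> 2 / ((V i - E)^2 + R^2)" by (rule aux3[OF pos le'])
  qed
  also have "\<dots> \<le> (\<Sum>i<N. 2 / ((V i - E)^2 + R^2))"
    using assms by (intro sum_mono2) (auto intro: add_nonneg_pos)
  also have "\<dots> = 2 * (\<Sum>i<N. 1 / ((V i - E)^2 + R^2))" by (simp add: sum_distrib_left)
  finally show ?thesis unfolding Fr_def Sf_def
    by (cases "N = 0") (auto simp: field_simps)
qed

lemma lower_gen:
  fixes q F a b h R :: real
  assumes q: "1 \<le> q" and h: "0 < h" and b: "0 \<le> b" "b \<le> h" and R: "0 < R"
    and tpos: "\<And>i. i < N \<Longrightarrow> 0 < (V i - a)^2 + b^2"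
    and S: "2 * F \<le> Sf N V a h" and Fb: "Fr N V a h R \<le> F"
  shows "F * (R^2 + h^2) powr (1 - q) \<le> (1 / real N) * (\<Sum>i<N. ((V i - a)^2 + b^2) powr (-q))"
proof -
  let ?A = "{i. i < N \<and> R^2 < (V i - a)^2}"
  let ?B = "{i. i < N \<and> \<not> R^2 < (V i - a)^2}"
  let ?f = "\<lambda>i. 1 / ((V i - a)^2 + h^2)"
  have split: "{..<N} = ?A \<union> ?B" by auto
  have "(\<Sum>i<N. ?f i) = (\<Sum>i\<in>?A. ?f i) + (\<Sum>i\<in>?B. ?f i)"
    unfolding split by (rule sum.union_disjoint) auto
  hence "Sf N V a h = Fr N V a h R + (1 / real N) * (\<Sum>i\<in>?B. ?f i)"
    unfolding Sf_def Fr_def by (simp add: distrib_left)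
  hence near: "F \<le> (1 / real N) * (\<Sum>i\<in>?B. ?f i)" using S Fb by linarith
  have P: "0 < (R^2 + h^2) powr (1 - q)" using R by simp
  have tm: "?f i * (R^2 + h^2) powr (1 - q) \<le> ((V i - a)^2 + b^2) powr (-q)" if i: "i \<in> ?B" for i
  proof -
    define t where "t = (V i - a)^2 + b^2"
    define d where "d = (V i - a)^2 + h^2"
    have t0: "0 < t" using tpos i unfolding t_def by auto
    have td: "t \<le> d" unfolding t_def d_def using b by (simp add: power_mono)
    have d0: "0 < d" using t0 td by linarith
    have dR: "d \<le> R^2 + h^2" using i unfolding d_def by auto
    have "1 / d * (R^2 + h^2) powr (1 - q) \<le> 1 / d * d powr (1 - q)" by (rule t1[OF q d0 dR])
    also have "\<dots> = d powr (-q)" by (rule t2[OF d0])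
    also have "\<dots> \<le> t powr (-q)" using powr_mono2'[of "-q" t d] q t0 td by auto
    finally show ?thesis unfolding t_def d_def .
  qed
  have "F * (R^2 + h^2) powr (1 - q) \<le> (1 / real N) * (\<Sum>i\<in>?B. ?f i) * (R^2 + h^2) powr (1 - q)"
    by (rule mult_right_mono) (use near P in auto)
  also have "\<dots> = (1 / real N) * (\<Sum>i\<in>?B. ?f i * (R^2 + h^2) powr (1 - q))"
    by (simp add: sum_distrib_right mult.assoc)
  also have "\<dots> \<le> (1 / real N) * (\<Sum>i\<in>?B. ((V i - a)^2 + b^2) powr (-q))"
    by (intro mult_left_mono sum_mono tm) auto
  also have "\<dots> \<le> (1 / real N) * (\<Sum>i<N. ((V i - a)^2 + b^2) powr (-q))"
    by (intro mult_left_mono sum_mono2) auto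
  finally show ?thesis .
qed

lemma P1:
  fixes b p :: real assumes b: "0 < b"
  shows "(b^2) powr (1 - p/2) / b = 1 / b powr (p - 1)"
proof -
  have "(b^2) powr (1 - p/2) = (b powr 2) powr (1 - p/2)" using b by simp
  also have "\<dots> = b powr (2 * (1 - p/2))" by (rule powr_powr)
  finally have e1: "(b^2) powr (1 - p/2) = b powr (2 - p)" by (simp add: algebra_simps)
  have "b powr (2 - p) / b = b powr (2 - p) / b powr 1" using b by (simp only: powr_one less_imp_le)
  also have "\<dots> = b powr ((2 - p) - 1)" by (rule powr_diff[symmetric])
  also have "(2 - p) - 1 = - (p - 1)" by simp
  also have "b powr (- (p - 1)) = 1 / b powr (p - 1)" by (rule powr_minus_divide)
  finally show ?thesis unfolding e1 .
qed

lemma P2: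
  fixes w p :: real assumes w: "0 < w"
  shows "(w^2) powr (1 - p/2) / sqrt w = 1 / w powr (p - 3/2)"
proof -
  have "(w^2) powr (1 - p/2) = (w powr 2) powr (1 - p/2)" using w by simp
  also have "\<dots> = w powr (2 * (1 - p/2))" by (rule powr_powr)
  finally have e1: "(w^2) powr (1 - p/2) = w powr (2 - p)" by (simp add: algebra_simps)
  have "w powr (2 - p) / sqrt w = w powr (2 - p) / w powr (1/2)" using w by (simp only: powr_half_sqrt less_imp_le)
  also have "\<dots> = w powr ((2 - p) - 1/2)" by (rule powr_diff[symmetric])
  also have "(2 - p) - 1/2 = - (p - 3/2)" by simp
  also have "w powr (- (p - 3/2)) = 1 / w powr (p - 3/2)" by (rule powr_minus_divide)
  finally show ?thesis unfolding e1 .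
qed

lemma P3:
  fixes x y e :: real assumes "0 < x" "x \<le> y" "0 \<le> e"
  shows "1 / y powr e \<le> 1 / x powr e"
proof -
  have "x powr e \<le> y powr e" using assms by (intro powr_mono2) auto
  moreover have "0 < x powr e" using assms by simp
  ultimately show ?thesis by (intro frac_le) auto
qed


lemma reg_pos:
  assumes "regular N phi CV V" "0 \<le> E" "E \<le> 1"
    "sqrt (eta_star N phi) * sqrt E + eta_star N phi \<le> h" "h \<le> 10"
  shows "(1/CV) * sqrt (E + h) \<le> h * Sf N V E h \<and> h * Sf N V E h \<le> CV * sqrt (E + h)"
  using assms unfolding regular_def Im_mV by (metis abs_of_nonneg)

lemma reg_neg:
  assumes "regular N phi CV V" "-1 \<le> E" "E \<le> 0" "eta_star N phi \<le> h" "h \<le> 10"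
  shows "(1/CV) * (h / sqrt (- E + h)) \<le> h * Sf N V E h \<and> h * Sf N V E h \<le> CV * (h / sqrt (- E + h))"
  using assms unfolding regular_def Im_mV by (metis abs_of_nonpos)

lemma reg_misc:
  assumes "regular N phi CV V"
  shows "1 \<le> N" "0 < eta_star N phi" "\<And>i. i < N \<Longrightarrow> V i < -1 \<or> - eta_star N phi < V i"
proof -
  show N: "1 \<le> N" using assms unfolding regular_def by auto
  show "0 < eta_star N phi" unfolding eta_star_def using N by simp
  fix i assume "i < N"
  then have "V i \<notin> {-1 .. - eta_star N phi}" using assms unfolding regular_def by auto
  then show "V i < -1 \<or> - eta_star N phi < V i" by auto
qed


definition Kc :: "real \<Rightarrow> real" where "Kc CV = 48 * CV^4 + 1"
definition M0c :: "real \<Rightarrow> real \<Rightarrow> real" where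
  "M0c CV p = (1 / (8 * CV)) * (8 * CV + 100) powr (1 - p/2)"
definition cA :: "real \<Rightarrow> real \<Rightarrow> real" where
  "cA CV p = min ((Kc CV^2 + 1) powr (1 - p/2) / (2 * CV)) (M0c CV p / (4 / (10 / Kc CV) powr (p - 1)))"

lemma Kc_facts:
  assumes "0 < CV"
  shows "1 \<le> Kc CV" "(4 * CV^2) * sqrt (Kc CV) \<le> Kc CV" "48 * CV^4 \<le> Kc CV"
proof -
  show "1 \<le> Kc CV" unfolding Kc_def using assms by simp
  show "48 * CV^4 \<le> Kc CV" unfolding Kc_def by simp
  have k0: "0 \<le> Kc CV" using \<open>1 \<le> Kc CV\<close> by linarith
  have e: "(4 * CV^2)^2 = 16 * CV^4" by algebra
  have "0 \<le> CV^4" by simp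
  hence "(4 * CV^2)^2 \<le> Kc CV" unfolding Kc_def e by linarith
  hence s: "4 * CV^2 \<le> sqrt (Kc CV)" by (rule real_le_rsqrt)
  have "(4 * CV^2) * sqrt (Kc CV) \<le> sqrt (Kc CV) * sqrt (Kc CV)"
    by (rule mult_right_mono[OF s]) (use k0 in simp)
  also have "\<dots> = Kc CV" using k0 by simp
  finally show "(4 * CV^2) * sqrt (Kc CV) \<le> Kc CV" .
qed


lemma sqrt_le4: "(x::real) \<le> 16 \<Longrightarrow> sqrt x \<le> 4"
proof -
  assume "x \<le> 16"
  hence "sqrt x \<le> sqrt (4^2)" by (intro real_sqrt_le_mono) simp
  thus ?thesis by simp
qed

lemma caseA:
  fixes CV p a b :: real
  assumes reg: "regular N phi CV V" and CV: "0 < CV" and p: "2 \<le> p"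
    and a0: "0 \<le> a" and a1: "a \<le> 3/4"
    and b1: "sqrt (eta_star N phi) * sqrt a + eta_star N phi \<le> b" and b2: "b \<le> 10"
  shows "cA CV p * (sqrt (a + b) / b powr (p - 1)) \<le> moment N V p (Complex a b) \<and>
         moment N V p (Complex a b) \<le> CV * (sqrt (a + b) / b powr (p - 1))"
proof -
  define s where "s = eta_star N phi"
  define q where "q = p / 2"
  define K where "K = Kc CV"
  define X where "X = sqrt (a + b) / b powr (p - 1)"
  define Pb where "Pb = (b^2) powr (1 - q)"
  have s0: "0 < s" using reg_misc(2)[OF reg] unfolding s_def .
  have "0 \<le> sqrt s * sqrt a" using s0 a0 by simp
  hence sb: "s \<le> b" using b1 unfolding s_def by linarith
  have b0: "0 < b" using s0 sb by linarith
  have a_le1: "a \<le> 1" using a1 by simp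
  have q1: "1 \<le> q" unfolding q_def using p by simp
  have K1: "1 \<le> K" unfolding K_def using Kc_facts(1)[OF CV] .
  have K0: "0 < K" using K1 by simp
  have X0: "0 \<le> X" unfolding X_def using a0 b0 by simp
  have PbX: "sqrt (a + b) * (Pb / b) = X" unfolding Pb_def q_def P1[OF b0] X_def by simp
  have mom: "moment N V p (Complex a b) = (1 / real N) * (\<Sum>i<N. ((V i - a)^2 + b^2) powr (-q))"
    unfolding moment_eq q_def ..
  have regb: "(1/CV) * sqrt (a + b) \<le> b * Sf N V a b \<and> b * Sf N V a b \<le> CV * sqrt (a + b)"
    using reg_pos[OF reg a0 a_le1 b1 b2] .
  have up0: "moment N V p (Complex a b) \<le> 1 * Sf N V a b * (b^2) powr (1 - q)"
    unfolding mom by (rule upper_gen[OF q1 _ b0]) (use b0 in auto)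
  have Sfb: "Sf N V a b \<le> CV * sqrt (a + b) / b" using regb b0 by (simp add: pos_le_divide_eq mult.commute)
  have "1 * Sf N V a b * (b^2) powr (1 - q) \<le> (CV * sqrt (a + b) / b) * Pb"
    unfolding Pb_def by (rule mult_right_mono) (use Sfb in auto)
  also have "\<dots> = CV * (sqrt (a + b) * (Pb / b))" by simp
  also have "\<dots> = CV * X" using PbX by simp
  finally have upper: "moment N V p (Complex a b) \<le> CV * X" using up0 by linarith
  have lower: "cA CV p * X \<le> moment N V p (Complex a b)"
  proof (cases "K * b \<le> 10")
    case True
    define F where "F = sqrt (a + b) / (2 * CV * b)"
    have Kb0: "0 < K * b" using K1 b0 by simp
    have S: "2 * F \<le> Sf N V a b"
    proof -
      have "2 * F = ((1/CV) * sqrt (a + b)) / b" unfolding F_def using CV b0 by (simp add: field_simps)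
      also have "\<dots> \<le> (b * Sf N V a b) / b" by (rule divide_right_mono) (use regb b0 in auto)
      also have "\<dots> = Sf N V a b" using b0 by simp
      finally show ?thesis .
    qed
    have bKb: "b \<le> K * b" using K1 b0 by simp
    have b1K: "sqrt (eta_star N phi) * sqrt a + eta_star N phi \<le> K * b" using b1 bKb by linarith
    have regK: "K * b * Sf N V a (K * b) \<le> CV * sqrt (a + K * b)"
      using reg_pos[OF reg a0 a_le1 b1K True] by blast
    have SK: "Sf N V a (K * b) \<le> CV * sqrt (a + K * b) / (K * b)"
      using regK Kb0 by (simp add: pos_le_divide_eq mult.commute)
    have sq1: "sqrt (a + K * b) \<le> sqrt K * sqrt (a + b)"
    proof -
      have "a \<le> K * a" using K1 a0 mult_right_mono[of 1 K a] by simp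
      moreover have "K * (a + b) = K * a + K * b" by (simp add: distrib_left)
      ultimately have "a + K * b \<le> K * (a + b)" by linarith
      hence "sqrt (a + K * b) \<le> sqrt (K * (a + b))" by (rule real_sqrt_le_mono)
      thus ?thesis by (simp add: real_sqrt_mult)
    qed
    have kk: "(4 * CV^2) * sqrt K \<le> K" unfolding K_def using Kc_facts(2)[OF CV] .
    have sab: "0 \<le> sqrt (a + b)" using a0 b0 by simp
    have main: "4 * CV^2 * sqrt (a + K * b) \<le> K * sqrt (a + b)"
    proof -
      have "4 * CV^2 * sqrt (a + K * b) \<le> 4 * CV^2 * (sqrt K * sqrt (a + b))"
        by (rule mult_left_mono[OF sq1]) simp
      also have "\<dots> = ((4 * CV^2) * sqrt K) * sqrt (a + b)" by (simp only: mult.assoc)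
      also have "\<dots> \<le> K * sqrt (a + b)" by (rule mult_right_mono[OF kk sab])
      finally show ?thesis .
    qed
    have pos: "0 < 2 * CV * K * b" using CV K0 b0 by (intro mult_pos_pos) auto
    have "2 * (CV * sqrt (a + K * b) / (K * b)) \<le> F"
    proof -
      have "2 * (CV * sqrt (a + K * b) / (K * b)) = (4 * CV^2 * sqrt (a + K * b)) / (2 * CV * K * b)"
        using CV b0 K0 by (simp add: field_simps power2_eq_square)
      also have "\<dots> \<le> (K * sqrt (a + b)) / (2 * CV * K * b)"
        by (rule divide_right_mono[OF main]) (use pos in simp)
      also have "\<dots> = F" unfolding F_def using CV b0 K0 by (simp add: field_simps)
      finally show ?thesis .
    qed
    hence Fb: "Fr N V a b (K * b) \<le> F" using far_reg[OF Kb0, of N V a b] SK by linarith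
    have low: "F * ((K * b)^2 + b^2) powr (1 - q) \<le> moment N V p (Complex a b)"
      unfolding mom by (rule lower_gen[OF q1 b0 _ _ Kb0 _ S Fb]) (use b0 in \<open>auto intro: add_nonneg_pos\<close>)
    have e: "(K * b)^2 + b^2 = (K^2 + 1) * b^2" by (simp add: power_mult_distrib algebra_simps)
    have e2: "((K * b)^2 + b^2) powr (1 - q) = (K^2 + 1) powr (1 - q) * Pb"
      unfolding Pb_def e by (rule powr_mult)
    have e3: "F * ((K^2 + 1) powr (1 - q) * Pb) = (K^2 + 1) powr (1 - q) / (2 * CV) * (sqrt (a + b) * (Pb / b))"
      unfolding F_def using CV b0 by (simp add: field_simps)
    have "(K^2 + 1) powr (1 - q) / (2 * CV) * X \<le> moment N V p (Complex a b)"
      using low unfolding e2 e3 PbX .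
    moreover have "cA CV p * X \<le> (K^2 + 1) powr (1 - q) / (2 * CV) * X"
      by (rule mult_right_mono[OF _ X0]) (simp add: cA_def K_def q_def)
    ultimately show ?thesis by linarith
  next
    case False
    define F where "F = 1 / (8 * CV)"
    define R where "R = sqrt (8 * CV)"
    have R0: "0 < R" unfolding R_def using CV by simp
    have R2: "R^2 = 8 * CV" unfolding R_def using CV by simp
    have Fb: "Fr N V a b R \<le> F" using far_triv[OF R0, of N V a b] unfolding R2 F_def .
    have S: "2 * F \<le> Sf N V a b"
    proof -
      have sq4: "sqrt b \<le> 4" using b2 by (intro sqrt_le4) simp
      have "sqrt b \<le> sqrt (a + b)" using a0 by simp
      hence A: "sqrt b / CV \<le> sqrt (a + b) / CV" using CV by (simp add: divide_right_mono)
      have A2: "(1/CV) * sqrt (a + b) = sqrt (a + b) / CV" by simp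
      have B: "b / (4 * CV) \<le> sqrt b / CV"
      proof -
        have "b = sqrt b * sqrt b" using b0 by simp
        also have "\<dots> \<le> 4 * sqrt b" by (rule mult_right_mono[OF sq4]) (use b0 in simp)
        finally have "b \<le> 4 * sqrt b" .
        thus ?thesis using CV by (simp add: field_simps)
      qed
      have "b / (4 * CV) \<le> b * Sf N V a b" using A A2 B regb by linarith
      hence "b * (1 / (4 * CV)) \<le> b * Sf N V a b" by simp
      hence "1 / (4 * CV) \<le> Sf N V a b" by (rule mult_left_le_imp_le[OF _ b0])
      thus ?thesis unfolding F_def by simp
    qed
    have low: "F * (R^2 + b^2) powr (1 - q) \<le> moment N V p (Complex a b)"
      unfolding mom by (rule lower_gen[OF q1 b0 _ _ R0 _ S Fb]) (use b0 in \<open>auto intro: add_nonneg_pos\<close>)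
    have pm: "(8 * CV + 100) powr (1 - q) \<le> (R^2 + b^2) powr (1 - q)"
    proof (rule powr_mono2')
      show "1 - q \<le> 0" using q1 by simp
      show "0 < R^2 + b^2" using R0 by (simp add: add_pos_nonneg)
      have "b^2 \<le> 10^2" using b0 b2 by (intro power_mono) auto
      thus "R^2 + b^2 \<le> 8 * CV + 100" unfolding R2 by simp
    qed
    have "M0c CV p \<le> F * (R^2 + b^2) powr (1 - q)"
      unfolding M0c_def F_def q_def by (rule mult_left_mono[OF pm[unfolded q_def]]) (use CV in simp)
    hence M0: "M0c CV p \<le> moment N V p (Complex a b)" using low by linarith
    define Y where "Y = 4 / (10 / K) powr (p - 1)"
    have Y0: "0 < Y" unfolding Y_def using K0 by simp
    have XY: "X \<le> Y"
    proof -
      have bK: "10 / K \<le> b" using False K0 by (simp add: divide_le_eq mult.commute)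
      have i1: "1 / b powr (p - 1) \<le> 1 / (10 / K) powr (p - 1)"
        by (rule P3) (use K0 bK p in auto)
      have i2: "sqrt (a + b) \<le> 4" using a1 b2 by (intro sqrt_le4) simp
      have "X = sqrt (a + b) * (1 / b powr (p - 1))" unfolding X_def by simp
      also have "\<dots> \<le> 4 * (1 / (10 / K) powr (p - 1))"
        by (rule mult_mono[OF i2 i1]) auto
      also have "\<dots> = Y" unfolding Y_def by simp
      finally show ?thesis .
    qed
    have c2: "cA CV p \<le> M0c CV p / Y" unfolding cA_def Y_def K_def by simp
    have M00: "0 \<le> M0c CV p" unfolding M0c_def using CV by simp
    have "cA CV p * X \<le> M0c CV p / Y * X"
      by (rule mult_right_mono[OF c2 X0])
    also have "\<dots> \<le> M0c CV p / Y * Y"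
      by (rule mult_left_mono[OF XY]) (use M00 Y0 in simp)
    also have "\<dots> = M0c CV p" using Y0 by simp
    finally show ?thesis using M0 by linarith
  qed
  show ?thesis using upper lower unfolding X_def by blast
qed


definition UB :: "real \<Rightarrow> real \<Rightarrow> real" where
  "UB CV p = 36 * sqrt 2 * CV / 36 powr (1 - p/2)"
definition cB :: "real \<Rightarrow> real \<Rightarrow> real" where
  "cB CV p = min ((Kc CV^2 + 1) powr (1 - p/2) / (2 * sqrt 2 * CV)) (M0c CV p * (10 / Kc CV) powr (p - 3/2))"

lemma caseB:
  fixes CV p a b :: real
  assumes reg: "regular N phi CV V" and CV: "0 < CV" and p: "2 \<le> p"
    and a0: "a \<le> 0" and a1: "-3/4 \<le> a" and b0: "0 \<le> b" and b2: "b \<le> 10"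
    and hyp: "2 * eta_star N phi \<le> b \<or> a \<le> - 2 * eta_star N phi \<or> (a = 0 \<and> eta_star N phi \<le> b)"
  shows "cB CV p * (1 / (\<bar>a\<bar> + b) powr (p - 3/2)) \<le> moment N V p (Complex a b) \<and>
         moment N V p (Complex a b) \<le> UB CV p * (1 / (\<bar>a\<bar> + b) powr (p - 3/2))"
proof -
  define s where "s = eta_star N phi"
  define q where "q = p / 2"
  define K where "K = Kc CV"
  define u where "u = - a"
  define w where "w = u + b"
  define h where "h = min w 10"
  define Y where "Y = 1 / w powr (p - 3/2)"
  define r where "r = 1 - q"
  have s0: "0 < s" using reg_misc(2)[OF reg] unfolding s_def .
  have hyp': "2 * s \<le> b \<or> 2 * s \<le> u \<or> (u = 0 \<and> s \<le> b)" using hyp unfolding s_def u_def by auto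
  have u0: "0 \<le> u" and u1: "u \<le> 3/4" unfolding u_def using a0 a1 by auto
  have absa: "\<bar>a\<bar> + b = w" unfolding w_def u_def using a0 by simp
  have ws: "s \<le> w" using hyp' s0 u0 b0 unfolding w_def by auto
  have w0: "0 < w" using ws s0 by linarith
  have s10: "s \<le> 10" using hyp' s0 u1 b2 by auto
  have hs: "s \<le> h" unfolding h_def using ws s10 by simp
  have h0: "0 < h" using hs s0 by linarith
  have h10: "h \<le> 10" unfolding h_def by simp
  have hw: "h \<le> w" unfolding h_def by simp
  have hw2: "w \<le> 2 * h" unfolding h_def w_def using u1 b2 u0 b0 by (simp add: min_def)
  have bh: "b \<le> h" unfolding h_def w_def using u0 b2 by simp
  have uh: "u \<le> h" unfolding h_def w_def using u1 b0 by simp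
  have q1: "1 \<le> q" unfolding q_def using p by simp
  have r0: "r \<le> 0" unfolding r_def using q1 by simp
  have K1: "1 \<le> K" unfolding K_def using Kc_facts(1)[OF CV] .
  have K0: "0 < K" using K1 by simp
  have Y0: "0 \<le> Y" unfolding Y_def using w0 by simp
  have mom: "moment N V p (Complex a b) = (1 / real N) * (\<Sum>i<N. ((V i - a)^2 + b^2) powr (-q))"
    unfolding moment_eq q_def ..
  have am1: "-1 \<le> a" using a1 by simp
  have uhpos: "0 < u + h" using u0 h0 by simp
  have sqpos: "0 < sqrt (u + h)" using uhpos by simp
  have regh: "(1/CV) * (h / sqrt (- a + h)) \<le> h * Sf N V a h \<and> h * Sf N V a h \<le> CV * (h / sqrt (- a + h))"
    using reg_neg[OF reg am1 a0 hs[unfolded s_def] h10] .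
  have Sh_lo: "1 / (CV * sqrt (u + h)) \<le> Sf N V a h"
  proof -
    have "(1/CV) * (h / sqrt (- a + h)) = h * (1 / (CV * sqrt (u + h)))" unfolding u_def by simp
    hence "h * (1 / (CV * sqrt (u + h))) \<le> h * Sf N V a h" using regh by linarith
    thus ?thesis by (rule mult_left_le_imp_le[OF _ h0])
  qed
  have Sh_up: "Sf N V a h \<le> CV / sqrt (u + h)"
  proof -
    have "CV * (h / sqrt (- a + h)) = h * (CV / sqrt (u + h))" unfolding u_def by simp
    hence "h * Sf N V a h \<le> h * (CV / sqrt (u + h))" using regh by linarith
    thus ?thesis by (rule mult_left_le_imp_le[OF _ h0])
  qed
  have tlow: "(V i - a)^2 + w^2 \<le> 36 * (V i - a)^2 + 36 * b^2" if i: "i < N" for i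
  proof (cases "u \<le> b")
    case True
    have "w \<le> 2 * b" unfolding w_def using True by simp
    hence "w^2 \<le> (2 * b)^2" using w0 by (intro power_mono) auto
    hence "w^2 \<le> 4 * b^2" by (simp add: power_mult_distrib)
    moreover have "0 \<le> (V i - a)^2" "0 \<le> b^2" by simp_all
    ultimately show ?thesis by linarith
  next
    case False
    have u2s: "2 * s \<le> u" using hyp' False b0 by auto
    have gap: "V i < -1 \<or> - s < V i" using reg_misc(3)[OF reg i] unfolding s_def .
    have dist: "u / 3 \<le> \<bar>V i - a\<bar>"
      using gap u2s u1 u0 unfolding u_def by auto
    have "(u / 3)^2 \<le> \<bar>V i - a\<bar>^2" using dist u0 by (intro power_mono) auto
    hence d1: "u^2 \<le> 9 * (V i - a)^2" by (simp add: power_divide)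
    have e: "2 * u^2 + 2 * b^2 - w^2 = (u - b)^2" unfolding w_def by algebra
    have "0 \<le> (u - b)^2" by simp
    hence d2: "w^2 \<le> 2 * u^2 + 2 * b^2" using e by linarith
    have "0 \<le> (V i - a)^2" "0 \<le> b^2" by simp_all
    then show ?thesis using d1 d2 by linarith
  qed
  have tpos: "0 < (V i - a)^2 + b^2" if i: "i < N" for i
  proof -
    have "0 < w^2" using w0 by simp
    moreover have "0 \<le> (V i - a)^2" by simp
    ultimately show ?thesis using tlow[OF i] by linarith
  qed
  have W0: "0 < w^2 / 36" using w0 by simp
  have hw': "h^2 \<le> w^2" using h0 hw by (intro power_mono) auto
  have up0: "moment N V p (Complex a b) \<le> 36 * Sf N V a h * (w^2 / 36) powr (1 - q)"
    unfolding mom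
  proof (rule upper_gen[OF q1 W0 h0])
    fix i assume i: "i < N"
    show "w^2 / 36 \<le> (V i - a)^2 + b^2" using tlow[OF i] zero_le_power2[of "V i - a"] by linarith
    have "(V i - a)^2 + h^2 \<le> 36 * (V i - a)^2 + 36 * b^2" using tlow[OF i] hw' by linarith
    thus "(V i - a)^2 + h^2 \<le> 36 * ((V i - a)^2 + b^2)" by (simp only: distrib_left)
  qed
  have sq2: "sqrt w \<le> sqrt 2 * sqrt (u + h)"
  proof -
    have "w \<le> 2 * u + 2 * h" using hw2 u0 by linarith
    hence "sqrt w \<le> sqrt (2 * u + 2 * h)" by (rule real_sqrt_le_mono)
    also have "sqrt (2 * u + 2 * h) = sqrt 2 * sqrt (u + h)" by (simp add: real_sqrt_mult[symmetric] distrib_left)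
    finally show ?thesis .
  qed
  have Sh_up2: "Sf N V a h \<le> CV * sqrt 2 / sqrt w"
  proof -
    have "CV / sqrt (u + h) = (CV * sqrt 2) / (sqrt 2 * sqrt (u + h))" by simp
    also have "\<dots> \<le> (CV * sqrt 2) / sqrt w"
      by (rule frac_le) (use CV w0 sq2 in auto)
    finally show ?thesis using Sh_up by linarith
  qed
  define P where "P = (w^2) powr r"
  have P0: "0 \<le> P" unfolding P_def by simp
  have PY: "P / sqrt w = Y" unfolding P_def r_def q_def Y_def by (rule P2[OF w0])
  have up1: "36 * Sf N V a h * (w^2 / 36) powr (1 - q) \<le> 36 * (CV * sqrt 2 / sqrt w) * (w^2 / 36) powr (1 - q)"
    by (rule mult_right_mono) (use Sh_up2 in auto)
  have e1: "(w^2 / 36) powr (1 - q) = P / 36 powr r" unfolding P_def r_def by (rule powr_divide)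
  have e2: "36 * (CV * sqrt 2 / sqrt w) * (P / 36 powr r) = UB CV p * (P / sqrt w)"
    unfolding UB_def r_def q_def by (simp add: field_simps)
  have e3: "36 * (CV * sqrt 2 / sqrt w) * (w^2 / 36) powr (1 - q) = UB CV p * Y"
    unfolding e1 e2 PY ..
  have upper: "moment N V p (Complex a b) \<le> UB CV p * Y" using up0 up1 e3 by linarith
  have lower: "cB CV p * Y \<le> moment N V p (Complex a b)"
  proof (cases "K * h \<le> 10")
    case True
    define F where "F = 1 / (2 * CV * sqrt (u + h))"
    have Kh0: "0 < K * h" using K0 h0 by simp
    have S: "2 * F \<le> Sf N V a h" unfolding F_def using Sh_lo by simp
    have hKh: "h \<le> K * h" using K1 h0 by simp
    have sKh: "eta_star N phi \<le> K * h" using hs hKh unfolding s_def by linarith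
    have regK: "K * h * Sf N V a (K * h) \<le> CV * (K * h / sqrt (- a + K * h))"
      using reg_neg[OF reg am1 a0 sKh True] by blast
    have uKh: "0 < u + K * h" using u0 Kh0 by simp
    have SK: "Sf N V a (K * h) \<le> CV / sqrt (u + K * h)"
    proof -
      have "CV * (K * h / sqrt (- a + K * h)) = (K * h) * (CV / sqrt (u + K * h))" unfolding u_def by simp
      hence "(K * h) * Sf N V a (K * h) \<le> (K * h) * (CV / sqrt (u + K * h))" using regK by linarith
      thus ?thesis by (rule mult_left_le_imp_le[OF _ Kh0])
    qed
    have main: "4 * CV^2 * sqrt (u + h) \<le> sqrt (u + K * h)"
    proof (rule real_le_rsqrt)
      have c4: "0 \<le> CV^4" by simp
      have "(4 * CV^2 * sqrt (u + h))^2 = 16 * CV^4 * (u + h)"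
        using uhpos by (simp add: power_mult_distrib power2_eq_square power4_eq_xxxx)
      also have "\<dots> \<le> 16 * CV^4 * (2 * h)" using uh c4 by (intro mult_left_mono) auto
      also have "\<dots> = (32 * CV^4) * h" by simp
      also have "\<dots> \<le> K * h"
      proof (rule mult_right_mono)
        show "32 * CV^4 \<le> K" using Kc_facts(3)[OF CV] c4 unfolding K_def by linarith
      qed (use h0 in simp)
      also have "\<dots> \<le> u + K * h" using u0 by simp
      finally show "(4 * CV^2 * sqrt (u + h))^2 \<le> u + K * h" .
    qed
    have sqK: "0 < sqrt (u + K * h)" using uKh by simp
    have pos: "0 < 2 * CV * sqrt (u + h) * sqrt (u + K * h)" using CV sqpos sqK by (intro mult_pos_pos) auto
    have "2 * (CV / sqrt (u + K * h)) \<le> F"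
    proof -
      have "2 * (CV / sqrt (u + K * h)) = (4 * CV^2 * sqrt (u + h)) / (2 * CV * sqrt (u + h) * sqrt (u + K * h))"
        using CV sqpos sqK by (simp add: field_simps power2_eq_square)
      also have "\<dots> \<le> sqrt (u + K * h) / (2 * CV * sqrt (u + h) * sqrt (u + K * h))"
        by (rule divide_right_mono[OF main]) (use pos in simp)
      also have "\<dots> = F" unfolding F_def using CV sqpos sqK by (simp add: field_simps)
      finally show ?thesis .
    qed
    hence Fb: "Fr N V a h (K * h) \<le> F" using far_reg[OF Kh0, of N V a h] SK by linarith
    have low: "F * ((K * h)^2 + h^2) powr (1 - q) \<le> moment N V p (Complex a b)"
      unfolding mom by (rule lower_gen[OF q1 h0 b0 bh Kh0 _ S Fb]) (use tpos in auto)
    have e: "(K * h)^2 + h^2 = (K^2 + 1) * h^2" by (simp add: power_mult_distrib algebra_simps)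
    have pm: "((K^2 + 1) * w^2) powr r \<le> ((K * h)^2 + h^2) powr r"
      unfolding e
    proof (rule powr_mono2'[OF r0])
      show "0 < (K^2 + 1) * h^2" using h0 by (intro mult_pos_pos) (auto simp: add_nonneg_pos)
      show "(K^2 + 1) * h^2 \<le> (K^2 + 1) * w^2" using hw' by (intro mult_left_mono) auto
    qed
    have e2: "((K^2 + 1) * w^2) powr r = (K^2 + 1) powr r * P" unfolding P_def by (rule powr_mult)
    have F2: "1 / (2 * sqrt 2 * CV * sqrt w) \<le> F"
    proof -
      have "sqrt (u + h) \<le> sqrt (2 * w)" using uh hw by (intro real_sqrt_le_mono) simp
      hence "sqrt (u + h) \<le> sqrt 2 * sqrt w" by (simp add: real_sqrt_mult)
      hence le2: "2 * CV * sqrt (u + h) \<le> 2 * sqrt 2 * CV * sqrt w" using CV by simp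
      have "1 / (2 * sqrt 2 * CV * sqrt w) \<le> 1 / (2 * CV * sqrt (u + h))"
        by (rule frac_le[OF _ _ _ le2]) (use CV sqpos in auto)
      thus ?thesis unfolding F_def .
    qed
    have KP0: "0 \<le> (K^2 + 1) powr r * P" using P0 by simp
    have g1: "1 / (2 * sqrt 2 * CV * sqrt w) * ((K^2 + 1) powr r * P) \<le> F * ((K^2 + 1) powr r * P)"
      by (rule mult_right_mono[OF F2 KP0])
    have pm2: "(K^2 + 1) powr r * P \<le> ((K * h)^2 + h^2) powr r" using pm unfolding e2 .
    have F0: "0 \<le> F" unfolding F_def using CV sqpos by simp
    have g2: "F * ((K^2 + 1) powr r * P) \<le> F * ((K * h)^2 + h^2) powr r"
      by (rule mult_left_mono[OF pm2 F0])
    have g4: "F * ((K * h)^2 + h^2) powr r = F * ((K * h)^2 + h^2) powr (1 - q)" unfolding r_def ..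
    have g3: "1 / (2 * sqrt 2 * CV * sqrt w) * ((K^2 + 1) powr r * P) = (K^2 + 1) powr r / (2 * sqrt 2 * CV) * Y"
      unfolding PY[symmetric] using CV w0 by (simp add: field_simps)
    have "(K^2 + 1) powr r / (2 * sqrt 2 * CV) * Y \<le> moment N V p (Complex a b)"
      using g1 g2 g3 g4 low by linarith
    moreover have "cB CV p * Y \<le> (K^2 + 1) powr r / (2 * sqrt 2 * CV) * Y"
      by (rule mult_right_mono[OF _ Y0]) (simp add: cB_def K_def r_def q_def)
    ultimately show ?thesis by linarith
  next
    case False
    define F where "F = 1 / (8 * CV)"
    define R where "R = sqrt (8 * CV)"
    have R0: "0 < R" unfolding R_def using CV by simp
    have R2: "R^2 = 8 * CV" unfolding R_def using CV by simp
    have Fb: "Fr N V a h R \<le> F" using far_triv[OF R0, of N V a h] unfolding R2 F_def .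
    have S: "2 * F \<le> Sf N V a h"
    proof -
      have "sqrt (u + h) \<le> 4" using u1 h10 by (intro sqrt_le4) simp
      hence le2: "CV * sqrt (u + h) \<le> CV * 4" using CV by simp
      have "1 / (CV * 4) \<le> 1 / (CV * sqrt (u + h))"
        by (rule frac_le[OF _ _ _ le2]) (use CV sqpos in auto)
      thus ?thesis unfolding F_def using Sh_lo by simp
    qed
    have low: "F * (R^2 + h^2) powr (1 - q) \<le> moment N V p (Complex a b)"
      unfolding mom by (rule lower_gen[OF q1 h0 b0 bh R0 _ S Fb]) (use tpos in auto)
    have pm: "(8 * CV + 100) powr (1 - q) \<le> (R^2 + h^2) powr (1 - q)"
    proof (rule powr_mono2')
      show "1 - q \<le> 0" using q1 by simp
      show "0 < R^2 + h^2" using R0 by (simp add: add_pos_nonneg)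
      have "h^2 \<le> 10^2" using h0 h10 by (intro power_mono) auto
      thus "R^2 + h^2 \<le> 8 * CV + 100" unfolding R2 by simp
    qed
    have "M0c CV p \<le> F * (R^2 + h^2) powr (1 - q)"
      unfolding M0c_def F_def q_def by (rule mult_left_mono[OF pm[unfolded q_def]]) (use CV in simp)
    hence M0: "M0c CV p \<le> moment N V p (Complex a b)" using low by linarith
    define T where "T = (10 / K) powr (p - 3/2)"
    have T0: "0 < T" unfolding T_def using K0 by simp
    have YT: "Y \<le> 1 / T"
    proof -
      have "10 / K \<le> h" using False K0 by (simp add: divide_le_eq mult.commute)
      hence wK: "10 / K \<le> w" using hw by linarith
      show ?thesis unfolding Y_def T_def by (rule P3) (use K0 wK p in auto)
    qed
    have c2: "cB CV p \<le> M0c CV p * T" unfolding cB_def T_def K_def by simp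
    have M00: "0 \<le> M0c CV p" unfolding M0c_def using CV by simp
    have "cB CV p * Y \<le> M0c CV p * T * Y"
      by (rule mult_right_mono[OF c2 Y0])
    also have "\<dots> \<le> M0c CV p * T * (1 / T)"
      by (rule mult_left_mono[OF YT]) (use M00 T0 in simp)
    also have "\<dots> = M0c CV p" using T0 by simp
    finally show ?thesis using M0 by linarith
  qed
  show ?thesis using upper lower unfolding Y_def absa by blast
qed


lemma cA_pos: assumes "0 < CV" shows "0 < cA CV p"
proof -
  have K0: "0 < Kc CV" using Kc_facts(1)[OF assms] by simp
  have "0 \<le> Kc CV^2" by simp
  hence "0 < Kc CV^2 + 1" by linarith
  hence "0 < (Kc CV^2 + 1) powr (1 - p/2)" by simp
  hence "0 < (Kc CV^2 + 1) powr (1 - p/2) / (2 * CV)" using assms by (intro divide_pos_pos) auto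
  moreover have "0 < M0c CV p" unfolding M0c_def using assms by simp
  moreover have "0 < 4 / (10 / Kc CV) powr (p - 1)" using K0 by simp
  ultimately show ?thesis unfolding cA_def by simp
qed

lemma cB_pos: assumes "0 < CV" shows "0 < cB CV p"
proof -
  have K0: "0 < Kc CV" using Kc_facts(1)[OF assms] by simp
  have "0 \<le> Kc CV^2" by simp
  hence "0 < Kc CV^2 + 1" by linarith
  hence "0 < (Kc CV^2 + 1) powr (1 - p/2)" by simp
  hence "0 < (Kc CV^2 + 1) powr (1 - p/2) / (2 * sqrt 2 * CV)" using assms by (intro divide_pos_pos) auto
  moreover have "0 < M0c CV p" unfolding M0c_def using assms by simp
  moreover have "0 < (10 / Kc CV) powr (p - 3/2)" using K0 by simp
  ultimately show ?thesis unfolding cB_def by simp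
qed

lemma scale_lo:
  fixes c C X m :: real
  assumes "0 < c" "1 / c \<le> C" "0 \<le> X" "c * X \<le> m"
  shows "1 / C * X \<le> m"
proof -
  have C0: "0 < C" using assms(1,2) by (meson less_le_trans zero_less_divide_1_iff)
  have "1 / C \<le> c" using assms(1,2) C0 by (simp add: field_simps)
  hence "1 / C * X \<le> c * X" using assms(3) by (rule mult_right_mono)
  thus ?thesis using assms(4) by linarith
qed

lemma scale_up:
  fixes U C X m :: real
  assumes "U \<le> C" "0 \<le> X" "m \<le> U * X"
  shows "m \<le> C * X"
proof -
  have "U * X \<le> C * X" using assms(1,2) by (rule mult_right_mono)
  thus ?thesis using assms(3) by linarith
qed

theorem lemmaC1:
  fixes CV p :: real
  assumes "0 < CV" and "2 \<le> p"
  shows "\<exists>C>0. \<forall>N phi V a b.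
           regular N phi CV V \<longrightarrow> Complex a b \<in> D_star N phi \<longrightarrow>
           (0 \<le> a \<longrightarrow>
              (1/C) * (sqrt (a + b) / b powr (p - 1)) \<le> moment N V p (Complex a b) \<and>
              moment N V p (Complex a b) \<le> C * (sqrt (a + b) / b powr (p - 1))) \<and>
           (a \<le> 0 \<longrightarrow>
              (1/C) * (1 / (\<bar>a\<bar> + b) powr (p - 3/2)) \<le> moment N V p (Complex a b) \<and>
              moment N V p (Complex a b) \<le> C * (1 / (\<bar>a\<bar> + b) powr (p - 3/2)))"
proof -
  note CV = assms(1) and p = assms(2)
  define C where "C = max (max CV (UB CV p)) (max (1 / cA CV p) (1 / cB CV p))"
  have cA0: "0 < cA CV p" by (rule cA_pos[OF CV])
  have cB0: "0 < cB CV p" by (rule cB_pos[OF CV])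
  have C0: "0 < C" unfolding C_def using CV by simp
  have C1: "CV \<le> C" "UB CV p \<le> C" "1 / cA CV p \<le> C" "1 / cB CV p \<le> C" unfolding C_def by auto
  show ?thesis
  proof (intro exI[of _ C] conjI C0 allI impI)
    fix N phi V a b
    assume reg: "regular N phi CV V" and mem: "Complex a b \<in> D_star N phi"
    define s where "s = eta_star N phi"
    have s0: "0 < s" using reg_misc(2)[OF reg] unfolding s_def .
    have cases: "(-3/4 \<le> a \<and> a \<le> 0 \<and> 2 * s \<le> b \<and> b \<le> 10) \<or>
       (0 \<le> a \<and> a \<le> 3/4 \<and> sqrt s * sqrt \<bar>a\<bar> + s \<le> b \<and> b \<le> 10) \<or>
       (-3/4 \<le> a \<and> a \<le> - 2 * s \<and> 0 \<le> b \<and> b \<le> 10)"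
      using mem unfolding D_star_def s_def by auto
    {
      assume a0: "0 \<le> a"
      have a1: "a \<le> 3/4" and b2: "b \<le> 10" using cases a0 s0 by auto
      have b1: "sqrt s * sqrt a + s \<le> b" using cases a0 s0 by auto
      have A: "cA CV p * (sqrt (a + b) / b powr (p - 1)) \<le> moment N V p (Complex a b) \<and>
         moment N V p (Complex a b) \<le> CV * (sqrt (a + b) / b powr (p - 1))"
        using caseA[OF reg CV p a0 a1 b1[unfolded s_def] b2] .
      have X0: "0 \<le> sqrt (a + b) / b powr (p - 1)" using a0 b1 s0
        by (metis add_nonneg_nonneg divide_nonneg_nonneg less_imp_le order_trans powr_ge_zero real_sqrt_ge_zero mult_nonneg_nonneg real_sqrt_ge_zero)
      show "(1/C) * (sqrt (a + b) / b powr (p - 1)) \<le> moment N V p (Complex a b)"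
        by (rule scale_lo[OF cA0 C1(3) X0]) (use A in blast)
      show "moment N V p (Complex a b) \<le> C * (sqrt (a + b) / b powr (p - 1))"
        by (rule scale_up[OF C1(1) X0]) (use A in blast)
    }
    {
      assume a0: "a \<le> 0"
      have a1: "-3/4 \<le> a" and b2: "b \<le> 10" using cases a0 s0 by auto
      have b0: "0 \<le> b" using cases a0 s0 by auto
      have hyp: "2 * s \<le> b \<or> a \<le> - 2 * s \<or> (a = 0 \<and> s \<le> b)" using cases a0 s0 by auto
      have B: "cB CV p * (1 / (\<bar>a\<bar> + b) powr (p - 3/2)) \<le> moment N V p (Complex a b) \<and>
         moment N V p (Complex a b) \<le> UB CV p * (1 / (\<bar>a\<bar> + b) powr (p - 3/2))"
        using caseB[OF reg CV p a0 a1 b0 b2 hyp[unfolded s_def]] .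
      have Y0: "0 \<le> 1 / (\<bar>a\<bar> + b) powr (p - 3/2)" by simp
      show "(1/C) * (1 / (\<bar>a\<bar> + b) powr (p - 3/2)) \<le> moment N V p (Complex a b)"
        by (rule scale_lo[OF cB0 C1(4) Y0]) (use B in blast)
      show "moment N V p (Complex a b) \<le> C * (1 / (\<bar>a\<bar> + b) powr (p - 3/2))"
        by (rule scale_up[OF C1(2) Y0]) (use B in blast)
    }
  qed
qed

end
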